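(* Consider the system $\dot x=-\nabla\psi(x)+Jx+Bu$ on $\mathbb R^n$, where $\psi:\mathbb R^n\to\mathbb R$ is continuously differentiable and strictly convex with $\lim_{\|x\|\to\infty}\psi(x)/\|x\|=\infty$, $J\in\mathbb R^{n\times n}$ is skew-symmetric, $B\in\mathbb R^{n\times m}$, and the input $u\in\mathbb R^m$ is constant. Then there exists a unique point $x_0\in\mathbb R^n$ (depending on $u$) such that every solution $x(t)$ of the system converges to $x_0$ as $t\to\infty$. *)

theory Defs
  imports "HOL-Analysis.Analysis"
begin

definition strictly_convex_on :: "'a::real_vector set \<Rightarrow> ('a \<Rightarrow> real) \<Rightarrow> bool" where
  "strictly_convex_on S f \<longleftrightarrow>
     (\<forall>x\<in>S. \<forall>y\<in>S. x \<noteq> y \<longrightarrow> (\<forall>t::real. 0 < t \<and> t < 1 \<longrightarrow>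
        f ((1 - t) *\<^sub>R x + t *\<^sub>R y) < (1 - t) * f x + t * f y))"

end

theory Submission
  imports Defs
begin

lemma skew0:
  fixes J :: "real^'n^'n" assumes "transpose J = - J" shows "z \<bullet> (J *v z) = 0"
  by (smt (verit, ccfv_threshold) ab_left_minus all_zero_iff assms
    dot_lmul_matrix inner_commute inner_eq_zero_iff inner_right_distrib
    mat_0 matrix_vector_mult_0 matrix_vector_mult_add_rdistrib
    transpose_matrix_vector vec_0 vec_1 vec_1
    vector_matrix_mult_0_right)

lemma inner_aux:
  fixes a b :: "'a::real_inner"
  shows "a \<bullet> (h *\<^sub>R b) + (h *\<^sub>R b) \<bullet> a = 2 * (a \<bullet> b) * h"
proof -
  have "b \<bullet> a = a \<bullet> b" by (rule inner_commute)
  then show ?thesis by (simp add: algebra_simps)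
qed

lemma tangent:
  fixes \<psi> :: "'a::real_inner \<Rightarrow> real"
  assumes grad: "\<And>x. (\<psi> has_derivative (\<lambda>h. g x \<bullet> h)) (at x)"
    and strict_cvx: "strictly_convex_on UNIV \<psi>"
  shows "\<psi> y \<ge> \<psi> x + g x \<bullet> (y - x)"
proof -
  define d where "d = y - x"
  define \<phi> where "\<phi> t = \<psi> (x + t *\<^sub>R d)" for t :: real
  have cvx: "convex_on UNIV \<phi>"
  proof (rule convex_onI)
    fix t a b :: real assume t: "0 < t" "t < 1"
    have eq: "x + ((1 - t) *\<^sub>R a + t *\<^sub>R b) *\<^sub>R d = (1 - t) *\<^sub>R (x + a *\<^sub>R d) + t *\<^sub>R (x + b *\<^sub>R d)"
      by (simp add: algebra_simps)
    show "\<phi> ((1 - t) *\<^sub>R a + t *\<^sub>R b) \<le> (1 - t) * \<phi> a + t * \<phi> b"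
    proof (cases "x + a *\<^sub>R d = x + b *\<^sub>R d")
      case True
      have p: "(1 - t) *\<^sub>R (x + a *\<^sub>R d) + t *\<^sub>R (x + b *\<^sub>R d) = x + a *\<^sub>R d"
        using True by (metis scaleR_collapse)
      show ?thesis unfolding \<phi>_def eq p True[symmetric]
        by (simp add: algebra_simps)
    next
      case False
      then show ?thesis unfolding \<phi>_def eq using strict_cvx t
        unfolding strictly_convex_on_def by (meson UNIV_I less_imp_le)
    qed
  qed simp
  have "((\<lambda>t. x + t *\<^sub>R d) has_derivative (\<lambda>h. h *\<^sub>R d)) (at 0)"
    by (auto intro!: derivative_eq_intros)
  from has_derivative_compose[OF this grad]
  have "(\<phi> has_derivative (\<lambda>h. g (x + 0 *\<^sub>R d) \<bullet> (h *\<^sub>R d))) (at 0)"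
    unfolding \<phi>_def o_def .
  then have "(\<phi> has_field_derivative (g x \<bullet> d)) (at 0)"
    unfolding has_field_derivative_def by (simp add: mult.commute[of _ "g x \<bullet> d"])
  then have "(\<phi> has_field_derivative (g x \<bullet> d)) (at 0 within UNIV)" by simp
  from convex_on_imp_above_tangent[OF cvx _ _ _ this, of 1]
  have "\<phi> 1 - \<phi> 0 \<ge> g x \<bullet> d" by simp
  then show ?thesis unfolding \<phi>_def d_def by simp
qed

lemma strict_tangent:
  fixes \<psi> :: "'a::real_inner \<Rightarrow> real"
  assumes grad: "\<And>x. (\<psi> has_derivative (\<lambda>h. g x \<bullet> h)) (at x)"
    and strict_cvx: "strictly_convex_on UNIV \<psi>"
    and ne: "x \<noteq> y"
  shows "\<psi> y > \<psi> x + g x \<bullet> (y - x)"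
proof -
  define m where "m = (1 - 1/2) *\<^sub>R x + (1/2::real) *\<^sub>R y"
  have H: "\<forall>t::real. 0 < t \<and> t < 1 \<longrightarrow>
        \<psi> ((1 - t) *\<^sub>R x + t *\<^sub>R y) < (1 - t) * \<psi> x + t * \<psi> y"
    using strict_cvx ne unfolding strictly_convex_on_def by blast
  have "\<psi> m < (1 - 1/2) * \<psi> x + (1/2) * \<psi> y"
    using spec[OF H, of "1/2"] unfolding m_def by simp
  moreover have "\<psi> m \<ge> \<psi> x + g x \<bullet> (m - x)" by (rule tangent[OF grad strict_cvx])
  moreover have "m - x = (1/2::real) *\<^sub>R (y - x)" unfolding m_def
    by (simp add: algebra_simps flip: scaleR_add_left)
  ultimately show ?thesis by (simp add: inner_scaleR_right)
qed

lemma strict_mono_grad: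
  fixes \<psi> :: "'a::real_inner \<Rightarrow> real"
  assumes grad: "\<And>x. (\<psi> has_derivative (\<lambda>h. g x \<bullet> h)) (at x)"
    and strict_cvx: "strictly_convex_on UNIV \<psi>"
    and ne: "x \<noteq> y"
  shows "(g x - g y) \<bullet> (x - y) > 0"
proof -
  have "\<psi> y > \<psi> x + g x \<bullet> (y - x)" by (rule strict_tangent[OF grad strict_cvx ne])
  moreover have "\<psi> x > \<psi> y + g y \<bullet> (x - y)" using ne by (intro strict_tangent[OF grad strict_cvx]) auto
  moreover have "g x \<bullet> (y - x) = - (g x \<bullet> (x - y))" by (simp add: inner_diff_right)
  ultimately show ?thesis by (simp add: inner_diff_left)
qed

lemma zero_exists:
  fixes F :: "'a::euclidean_space \<Rightarrow> 'a"
  assumes cont: "continuous_on UNIV F" and R: "R > 0" and pos: "\<And>x. norm x = R \<Longrightarrow> F x \<bullet> x > 0"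
  shows "\<exists>x. F x = 0"
proof (rule ccontr)
  assume nz: "\<not> ?thesis"
  define f where "f x = (- R / norm (F x)) *\<^sub>R F x" for x
  have "continuous_on (cball 0 R) f" unfolding f_def using nz
    by (auto intro!: continuous_intros continuous_on_subset[OF cont])
  moreover have "f \<in> cball 0 R \<rightarrow> cball 0 R" unfolding f_def using R nz by auto
  ultimately obtain x where x: "x \<in> cball 0 R" "f x = x"
    using brouwer[of "cball 0 R" f] R by auto
  have "norm (f x) = R" using R nz unfolding f_def by simp
  then have nx: "norm x = R" using x(2) by simp
  have "F x \<bullet> x = (- R / norm (F x)) * (F x \<bullet> F x)"
    using x(2) unfolding f_def by (metis inner_scaleR_right)
  also have "\<dots> < 0" using R nz by (simp add: divide_neg_pos mult_neg_pos)
  finally show False using pos[OF nx] by simp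
qed

lemma nonincr:
  fixes f :: "real \<Rightarrow> real"
  assumes "0 \<le> a" "a \<le> b"
    and "\<And>t. t \<ge> 0 \<Longrightarrow> (f has_field_derivative D t) (at t within {0..})"
    and "\<And>t. t \<ge> 0 \<Longrightarrow> D t \<le> 0"
  shows "f b \<le> f a"
proof (rule DERIV_nonpos_imp_decreasing_open[OF assms(2)])
  fix t assume t: "a < t" "t < b"
  have "t \<in> interior {0::real..}" using t assms(1) by simp
  then have "at t within {0..} = at t" by (rule at_within_interior)
  then show "\<exists>y. (f has_real_derivative y) (at t) \<and> y \<le> 0"
    using assms(3,4)[of t] t assms(1) by auto
next
  show "continuous_on {a..b} f"
    unfolding continuous_on_eq_continuous_within
  proof
    fix t assume "t \<in> {a..b}"
    then have "continuous (at t within {0..}) f" using assms(1) by (intro DERIV_continuous[of f "D t"] assms(3)) auto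
    then show "continuous (at t within {a..b}) f"
      by (rule continuous_within_subset) (use assms(1) in auto)
  qed
qed

theorem mainTheorem11:
  fixes \<psi> :: "real^'n \<Rightarrow> real"
    and grad\<psi> :: "real^'n \<Rightarrow> real^'n"
    and J :: "real^'n^'n"
    and B :: "real^'m^'n"
    and u :: "real^'m"
  assumes grad: "\<And>x. (\<psi> has_derivative (\<lambda>h. grad\<psi> x \<bullet> h)) (at x)"
    and C1: "continuous_on UNIV grad\<psi>"
    and strict_cvx: "strictly_convex_on UNIV \<psi>"
    and superlinear: "filterlim (\<lambda>x. \<psi> x / norm x) at_top at_infinity"
    and skew: "transpose J = - J"
  shows "\<exists>!x0 :: real^'n. \<forall>x :: real \<Rightarrow> real^'n.
           (\<forall>t\<ge>0. (x has_vector_derivative (- grad\<psi> (x t) + J *v x t + B *v u)) (at t within {0..}))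
           \<longrightarrow> (x \<longlongrightarrow> x0) at_top"
proof -
  define g where "g = grad\<psi>"
  define c where "c = norm (B *v u)"
  define F where "F x = g x - J *v x - B *v u" for x
  have contF: "continuous_on UNIV F" unfolding F_def g_def
    by (intro continuous_intros C1)
  have "\<forall>\<^sub>F x in at_infinity. c + \<bar>\<psi> 0\<bar> + 1 \<le> \<psi> x / norm x"
    using superlinear unfolding filterlim_at_top by blast
  then obtain b where b: "\<And>x. norm x \<ge> b \<Longrightarrow> c + \<bar>\<psi> 0\<bar> + 1 \<le> \<psi> x / norm x"
    unfolding eventually_at_infinity by blast
  define R where "R = max b 1"
  have R1: "R \<ge> 1" unfolding R_def by simp
  have posF: "F x \<bullet> x > 0" if nx: "norm x = R" for x
  proof -
    have Rp: "norm x > 0" using nx R1 by simp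
    have "c + \<bar>\<psi> 0\<bar> + 1 \<le> \<psi> x / norm x" using b[of x] nx unfolding R_def by fastforce
    then have ps: "(c + \<bar>\<psi> 0\<bar> + 1) * R \<le> \<psi> x" using Rp nx by (simp add: field_simps)
    have t: "\<psi> 0 \<ge> \<psi> x + g x \<bullet> (0 - x)" unfolding g_def by (rule tangent[OF grad strict_cvx])
    have jz: "(J *v x) \<bullet> x = 0" using skew0[OF skew, of x] by (metis inner_commute)
    have bu: "(B *v u) \<bullet> x \<le> c * R" unfolding c_def using nx
      by (metis norm_cauchy_schwarz)
    have "F x \<bullet> x = g x \<bullet> x - (B *v u) \<bullet> x" unfolding F_def using jz
      by (simp add: inner_diff_left)
    moreover have "g x \<bullet> x \<ge> \<psi> x - \<psi> 0" using t by (simp add: inner_minus_right)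
    moreover have "(\<bar>\<psi> 0\<bar> + 1) * R \<ge> \<bar>\<psi> 0\<bar> + 1" using R1 by (simp add: mult_le_cancel_left1)
    ultimately show ?thesis using ps bu by (simp add: algebra_simps)
  qed
  have "\<exists>x. F x = 0" by (rule zero_exists[OF contF _ posF]) (use R1 in simp_all)
  then obtain xs where Fxs: "F xs = 0" by blast
  have Bu: "B *v u = g xs - J *v xs" using Fxs unfolding F_def by (simp add: algebra_simps)
  have eq0: "- grad\<psi> xs + J *v xs + B *v u = 0" using Bu unfolding g_def by simp
  define h where "h z = (g (xs + z) - g xs) \<bullet> z" for z
  have hnn: "h z \<ge> 0" for z
  proof (cases "z = 0")
    case True then show ?thesis unfolding h_def by simp
  next
    case False
    then have "(g (xs + z) - g xs) \<bullet> ((xs + z) - xs) > 0"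
      unfolding g_def by (intro strict_mono_grad[OF grad strict_cvx]) auto
    then show ?thesis unfolding h_def by simp
  qed
  have hpos: "h z > 0" if "z \<noteq> 0" for z
  proof -
    have "(g (xs + z) - g xs) \<bullet> ((xs + z) - xs) > 0"
      unfolding g_def using that by (intro strict_mono_grad[OF grad strict_cvx]) auto
    then show ?thesis unfolding h_def by simp
  qed
  have conth: "continuous_on UNIV h"
  proof -
    have "continuous_on UNIV (\<lambda>z. g (xs + z))"
      by (rule continuous_on_compose2[of UNIV g UNIV "\<lambda>z. xs + z"])
         (auto simp: g_def C1 intro!: continuous_intros)
    then show ?thesis unfolding h_def by (intro continuous_intros) auto
  qed
  have conv: "(x \<longlongrightarrow> xs) at_top"
    if sol: "\<forall>t\<ge>0. (x has_vector_derivative (- grad\<psi> (x t) + J *v x t + B *v u)) (at t within {0..})"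
    for x :: "real \<Rightarrow> real^'n"
  proof -
    define y where "y t = x t - xs" for t
    define V where "V t = y t \<bullet> y t" for t
    have Vd: "(V has_field_derivative (-2 * h (y t))) (at t within {0..})" if t: "t \<ge> 0" for t
    proof -
      define x' where "x' = - grad\<psi> (x t) + J *v x t + B *v u"
      have xd: "(x has_derivative (\<lambda>h. h *\<^sub>R x')) (at t within {0..})"
        using sol t unfolding x'_def has_vector_derivative_def by blast
      have d1: "((\<lambda>s. x s - xs) has_derivative (\<lambda>h. h *\<^sub>R x')) (at t within {0..})"
        using has_derivative_diff[OF xd has_derivative_const[of xs]] by simp
      have "((\<lambda>s. (x s - xs) \<bullet> (x s - xs)) has_derivative
              (\<lambda>h. (x t - xs) \<bullet> (h *\<^sub>R x') + (h *\<^sub>R x') \<bullet> (x t - xs))) (at t within {0..})"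
        by (rule has_derivative_inner[OF d1 d1])
      then have "(V has_derivative (\<lambda>h. (x t - xs) \<bullet> (h *\<^sub>R x') + (h *\<^sub>R x') \<bullet> (x t - xs))) (at t within {0..})"
        unfolding V_def y_def .
      moreover have "(\<lambda>h. (x t - xs) \<bullet> (h *\<^sub>R x') + (h *\<^sub>R x') \<bullet> (x t - xs)) = (*) (2 * ((x t - xs) \<bullet> x'))"
        by (rule ext) (rule inner_aux)
      moreover have "x' = - (g (x t) - g xs) + J *v (x t - xs)"
        unfolding x'_def Bu g_def by (simp add: matrix_vector_mult_diff_distrib algebra_simps)
      then have "(x t - xs) \<bullet> x' = - h (y t)"
        unfolding h_def y_def using skew0[OF skew, of "x t - xs"]
        by (simp add: inner_add_right inner_diff_right inner_diff_left inner_commute)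
      ultimately show ?thesis unfolding has_field_derivative_def by simp
    qed
    have Vdec: "V t \<le> V s" if "0 \<le> s" "s \<le> t" for s t
      by (rule nonincr[OF that Vd]) (use hnn in auto)
    have Vn: "V t = norm (y t) ^ 2" for t unfolding V_def by (simp add: power2_norm_eq_inner)
    show ?thesis unfolding tendsto_iff dist_norm
    proof (intro allI impI)
      fix e :: real assume e: "e > 0"
      have "\<exists>T\<ge>0. norm (y T) < e"
      proof (rule ccontr)
        assume "\<not> ?thesis"
        then have ge: "\<And>T. T \<ge> 0 \<Longrightarrow> norm (y T) \<ge> e" by force
        define R0 where "R0 = norm (y 0)"
        define K where "K = cball (0::real^'n) R0 - ball 0 e"
        have cK: "compact K" unfolding K_def by (intro compact_diff compact_cball open_ball)
        have inK: "y t \<in> K" if "t \<ge> 0" for t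
        proof -
          have "norm (y t) ^ 2 \<le> norm (y 0) ^ 2" using Vdec[of 0 t] that Vn by simp
          then have "norm (y t) \<le> R0" unfolding R0_def using power2_le_imp_le by force
          then show ?thesis unfolding K_def using ge[OF that] by auto
        qed
        then have "K \<noteq> {}" by auto
        from continuous_attains_inf[OF cK this continuous_on_subset[OF conth]]
        obtain z0 where z0: "z0 \<in> K" "\<And>z. z \<in> K \<Longrightarrow> h z0 \<le> h z" by auto
        define \<delta> where "\<delta> = h z0"
        have "z0 \<noteq> 0" using z0(1) e unfolding K_def by auto
        then have dp: "\<delta> > 0" unfolding \<delta>_def by (rule hpos)
        define W where "W t = V t + 2 * \<delta> * t" for t
        have Wd: "(W has_field_derivative (-2 * h (y t) + 2 * \<delta>)) (at t within {0..})"
          if "t \<ge> 0" for t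
          unfolding W_def using Vd[OF that] by (auto intro!: derivative_eq_intros)
        define T where "T = V 0 / (2 * \<delta>) + 1"
        have V0: "V 0 \<ge> 0" unfolding V_def by simp
        have T0: "T \<ge> 0" unfolding T_def using V0 dp by simp
        have "W T \<le> W 0"
          by (rule nonincr[OF _ T0 Wd]) (use inK z0(2) \<delta>_def in force)+
        moreover have "V T \<ge> 0" unfolding V_def by simp
        moreover have "2 * \<delta> * T = V 0 + 2 * \<delta>" unfolding T_def using dp
          by (simp add: field_simps)
        ultimately show False using dp unfolding W_def by simp
      qed
      then obtain T where T: "T \<ge> 0" "norm (y T) < e" by blast
      show "\<forall>\<^sub>F t in at_top. norm (x t - xs) < e"
        unfolding eventually_at_top_linorder
      proof (intro exI allI impI)
        fix t assume "t \<ge> T"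
        then have "norm (y t) ^ 2 \<le> norm (y T) ^ 2" using Vdec[of T t] T Vn by simp
        then have "norm (y t) \<le> norm (y T)" using power2_le_imp_le by force
        then show "norm (x t - xs) < e" using T unfolding y_def by simp
      qed
    qed
  qed
  show ?thesis
  proof (rule ex1I[of _ xs])
    show "\<forall>x. (\<forall>t\<ge>0. (x has_vector_derivative (- grad\<psi> (x t) + J *v x t + B *v u)) (at t within {0..}))
           \<longrightarrow> (x \<longlongrightarrow> xs) at_top"
    proof (rule allI, rule impI)
      fix x :: "real \<Rightarrow> real^'n"
      assume "\<forall>t\<ge>0. (x has_vector_derivative (- grad\<psi> (x t) + J *v x t + B *v u)) (at t within {0..})"
      then show "(x \<longlongrightarrow> xs) at_top" by (rule conv)
    qed
  next
    fix z assume H: "\<forall>x :: real \<Rightarrow> real^'n.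
           (\<forall>t\<ge>0. (x has_vector_derivative (- grad\<psi> (x t) + J *v x t + B *v u)) (at t within {0..}))
           \<longrightarrow> (x \<longlongrightarrow> z) at_top"
    have "\<forall>t\<ge>0. ((\<lambda>t. xs) has_vector_derivative (- grad\<psi> ((\<lambda>t. xs) t) + J *v (\<lambda>t. xs) t + B *v u)) (at t within {0..})"
      unfolding eq0 by (auto intro: derivative_eq_intros)
    from mp[OF spec[OF H, of "\<lambda>t. xs"] this] have "((\<lambda>t::real. xs) \<longlongrightarrow> z) at_top" .
    then show "z = xs" by (rule tendsto_unique[OF trivial_limit_at_top_linorder _ tendsto_const])
  qed
qed

end
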